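(* Let $0<p,q<\infty$ and let $\mu$ be a finite positive Borel measure on $\overline{\mathbb{D}}$ such that for some $C>0$, $\|f\|_{H^p}\le C\|f\|_{L^q(\overline{\mathbb{D}},\mu)}$ for every $f\in H^p(\mathbb{D})\cap C(\overline{\mathbb{D}})$. Let $\nu=\mu|_{\partial\mathbb{D}}$ be the restriction of $\mu$ to the unit circle. Then $\|f\|_{H^p}\le C\|f\|_{L^q(\nu)}$ for every $f\in H^p(\mathbb{D})\cap C(\overline{\mathbb{D}})$, with the same constant $C$.
   Context: $H^p=H^p(\mathbb{D})$ ($0<p<\infty$) is the space of holomorphic $f$ on the unit disc $\mathbb{D}$ with $\|f\|_{H^p}^p=\sup_{0<r<1}\int_0^1|f(re^{2\pi it})|^p\,dt<\infty$. *)

theory Defs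
  imports "HOL-Analysis.Analysis"
begin

definition circle_mean :: "real \<Rightarrow> (complex \<Rightarrow> complex) \<Rightarrow> real \<Rightarrow> real" where
  "circle_mean p f r = integral {0..1} (\<lambda>t. cmod (f (complex_of_real r * cis (2 * pi * t))) powr p)"

definition in_Hardy :: "real \<Rightarrow> (complex \<Rightarrow> complex) \<Rightarrow> bool" where
  "in_Hardy p f \<longleftrightarrow> f holomorphic_on ball 0 1 \<and>
     (\<forall>r\<in>{0<..<1}. (\<lambda>t. cmod (f (complex_of_real r * cis (2 * pi * t))) powr p) integrable_on {0..1}) \<and>
     bdd_above (circle_mean p f ` {0<..<1})"

definition Hardy_norm :: "real \<Rightarrow> (complex \<Rightarrow> complex) \<Rightarrow> real" where
  "Hardy_norm p f = (SUP r\<in>{0<..<1}. circle_mean p f r) powr (1 / p)"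

definition Lq_norm :: "real \<Rightarrow> complex measure \<Rightarrow> (complex \<Rightarrow> complex) \<Rightarrow> real" where
  "Lq_norm q M f = (\<integral>z. cmod (f z) powr q \<partial>M) powr (1 / q)"

end

theory Submission
  imports Defs "HOL-Complex_Analysis.Complex_Analysis"
begin


lemma circlepath01_cis: "circlepath 0 1 x = cis (2*pi*x)"
  by (simp add: circlepath cis_conv_exp mult_ac)

lemma kernel_identity:
  fixes e z :: complex
  assumes e: "norm e = 1" and z: "norm z < 1"
  shows "e / (e - z) + cnj z * e / (1 - cnj z * e) =
         of_real ((1 - norm z ^ 2) / norm (e - z) ^ 2)"
proof -
  have ee: "cnj e * e = 1" using e by (metis complex_norm_square mult.commute of_real_1 power_one)
  have ez: "e - z \<noteq> 0" using e z by auto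
  have d: "1 - cnj z * e = e * cnj (e - z)" using ee by (simp add: algebra_simps)
  have cez: "cnj (e - z) \<noteq> 0" using ez by simp
  have n1: "of_real (norm (e - z) ^ 2) = (e - z) * cnj (e - z)"
    by (rule complex_norm_square)
  have n2: "of_real (norm z ^ 2) = z * cnj z"
    by (rule complex_norm_square)
  have "e / (e - z) + cnj z * e / (1 - cnj z * e) = e / (e - z) + cnj z / cnj (e - z)"
  proof -
    have "e \<noteq> 0" using e by auto
    have "cnj z * e / (1 - cnj z * e) = cnj z * e / (e * cnj (e - z))" using d by simp
    also have "\<dots> = cnj z / cnj (e - z)" using \<open>e \<noteq> 0\<close> by simp
    finally show ?thesis by simp
  qed
  also have "\<dots> = (e * cnj (e - z) + cnj z * (e - z)) / ((e - z) * cnj (e - z))"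
    using ez cez by (simp add: field_simps)
  also have "e * cnj (e - z) + cnj z * (e - z) = 1 - z * cnj z"
    using ee by (simp add: algebra_simps)
  finally show ?thesis using n1 n2 by (simp add: of_real_diff)
qed

lemma alg_aux:
  fixes c d1 d2 K w e :: complex
  assumes "c \<noteq> 0" "d1 \<noteq> 0" "d2 \<noteq> 0"
  shows "(1 / c) * ((K / d1 + K * w / d2) * (c * e)) = K * (e / d1 + w * e / d2)"
  using assms by (simp add: field_simps)

lemma contour_to_integral01:
  assumes "(f has_contour_integral I) (circlepath 0 1)"
  shows "((\<lambda>t. f (cis (2*pi*t)) * (2 * pi * \<i> * cis (2*pi*t))) has_integral I) {0..1}"
proof -
  have "((\<lambda>x. f (circlepath 0 1 x) * vector_derivative (circlepath 0 1) (at x within {0..1})) has_integral I) {0..1}"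
    using assms unfolding has_contour_integral_def .
  then show ?thesis
  proof (rule has_integral_eq[rotated])
    fix x :: real assume "x \<in> {0..1}"
    then show "f (circlepath 0 1 x) * vector_derivative (circlepath 0 1) (at x within {0..1}) =
       f (cis (2*pi*x)) * (2 * pi * \<i> * cis (2*pi*x))"
      by (simp add: vector_derivative_circlepath01 circlepath01_cis cis_conv_exp mult_ac)
  qed
qed

lemma poisson_repr:
  fixes k :: "complex \<Rightarrow> complex"
  assumes holk: "k holomorphic_on ball 0 R" and R: "1 < R" and z: "norm z < 1"
  shows "((\<lambda>t. k (cis (2*pi*t)) * of_real ((1 - norm z ^ 2) / norm (cis (2*pi*t) - z) ^ 2))
           has_integral k z) {0..1}"
proof -
  have sub: "cball 0 1 \<subseteq> ball (0::complex) R" using R by auto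
  have c1: "((\<lambda>u. k u / (u - z)) has_contour_integral (2 * of_real pi * \<i> * k z)) (circlepath 0 1)"
    apply (rule Cauchy_integral_circlepath)
    using holomorphic_on_imp_continuous_on[OF holomorphic_on_subset[OF holk sub]]
      holomorphic_on_subset[OF holk, of "ball 0 1"] R z by (auto simp: subset_ball)
  define R' where "R' = min R (2 / (1 + norm z))"
  have "1 < 2 / (1 + norm z)" using z by (simp add: field_simps add_pos_nonneg)
  then have R'1: "1 < R'" using R by (auto simp: R'_def)
  have nz: "1 - cnj z * u \<noteq> 0" if "u \<in> ball 0 R'" for u
  proof -
    have u: "norm u < 2 / (1 + norm z)" using that by (auto simp: R'_def)
    have "norm (cnj z * u) < 1"
    proof (cases "z = 0")
      case False
      then have "norm (cnj z * u) = norm z * norm u" by (simp add: norm_mult)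
      also have "\<dots> < norm z * (2 / (1 + norm z))" using u False by (intro mult_strict_left_mono) auto
      also have "\<dots> \<le> 1" using z by (simp add: field_simps add_pos_nonneg)
      finally show ?thesis .
    qed simp
    then show ?thesis by (metis norm_one order.irrefl right_minus_eq)
  qed
  have h2: "(\<lambda>u. k u * cnj z / (1 - cnj z * u)) holomorphic_on ball 0 R'"
    using holk nz by (auto intro!: holomorphic_intros intro: holomorphic_on_subset simp: R'_def)
  have c2: "((\<lambda>u. k u * cnj z / (1 - cnj z * u)) has_contour_integral 0) (circlepath 0 1)"
    apply (rule Cauchy_theorem_disc_simple[OF h2])
    using R'1 by (auto simp: path_image_circlepath)
  have i: "((\<lambda>t. (k (cis (2*pi*t)) / (cis (2*pi*t) - z) + k (cis (2*pi*t)) * cnj z / (1 - cnj z * cis (2*pi*t)))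
          * (2 * pi * \<i> * cis (2*pi*t))) has_integral (2 * of_real pi * \<i> * k z + 0)) {0..1}"
    using has_integral_add[OF contour_to_integral01[OF c1] contour_to_integral01[OF c2]]
    by (simp add: algebra_simps)
  have i': "((\<lambda>t. (1 / (2 * pi * \<i>)) * ((k (cis (2*pi*t)) / (cis (2*pi*t) - z) + k (cis (2*pi*t)) * cnj z / (1 - cnj z * cis (2*pi*t)))
          * (2 * pi * \<i> * cis (2*pi*t)))) has_integral (1 / (2 * pi * \<i>)) * (2 * of_real pi * \<i> * k z + 0)) {0..1}"
    by (rule has_integral_mult_right[OF i])
  have val: "(1 / (2 * pi * \<i>)) * (2 * of_real pi * \<i> * k z + 0) = k z" by simp
  show ?thesis
  proof (rule has_integral_eq[OF _ i'[unfolded val]])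
    fix t :: real
    have e: "norm (cis (2*pi*t)) = 1" by simp
    show "(1 / (2 * pi * \<i>)) * ((k (cis (2*pi*t)) / (cis (2*pi*t) - z) + k (cis (2*pi*t)) * cnj z / (1 - cnj z * cis (2*pi*t)))
          * (2 * pi * \<i> * cis (2*pi*t))) =
      k (cis (2*pi*t)) * of_real ((1 - norm z ^ 2) / norm (cis (2*pi*t) - z) ^ 2)"
    proof -
      define e where "e = cis (2*pi*t)"
      have "(1 / (2 * pi * \<i>)) * ((k e / (e - z) + k e * cnj z / (1 - cnj z * e)) * (2 * pi * \<i> * e))
          = k e * (e / (e - z) + cnj z * e / (1 - cnj z * e))"
      proof -
        have c: "(2 * pi * \<i>) \<noteq> (0::complex)" by simp
        have d1: "e - z \<noteq> 0" using e z unfolding e_def by auto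
        have d2: "1 - cnj z * e \<noteq> 0"
        proof
          assume "1 - cnj z * e = 0"
          then have "norm (cnj z * e) = 1" by (metis eq_iff_diff_eq_0 norm_one)
          then show False using z e unfolding e_def by (simp add: norm_mult)
        qed
        show ?thesis using alg_aux[OF c d1 d2, of "k e" "cnj z" e] by simp
      qed
      then show ?thesis using kernel_identity[OF e z] unfolding e_def by simp
    qed
  qed
qed

lemma norm_sym_unit:
  fixes a b :: complex and r :: real
  assumes a: "norm a = 1" and b: "norm b = 1"
  shows "norm (a - of_real r * b) = norm (b - of_real r * a)"
proof -
  have aa: "a * cnj a = 1" using a by (metis complex_norm_square of_real_1 power_one)
  have bb: "b * cnj b = 1" using b by (metis complex_norm_square of_real_1 power_one)
  have "a - of_real r * b = a * b * cnj (b - of_real r * a)"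
  proof -
    have "a * b * cnj (b - of_real r * a) = a * (b * cnj b) - of_real r * b * (a * cnj a)"
      by (simp add: algebra_simps)
    then show ?thesis using aa bb by simp
  qed
  then have "norm (a - of_real r * b) = norm a * norm b * norm (cnj (b - of_real r * a))"
    by (simp only: norm_mult)
  also have "norm (cnj (b - of_real r * a)) = norm (b - of_real r * a)" by (rule complex_mod_cnj)
  finally show ?thesis using a b by simp
qed

lemma cont_on_circle_comp:
  assumes "continuous_on (ball 0 R) k" "1 < R"
  shows "continuous_on UNIV (\<lambda>t. k (cis (2*pi*t)))"
  apply (rule continuous_on_compose2[OF assms(1)])
  using assms(2) by (auto intro!: continuous_intros)

lemma dist_unit_pos:
  fixes a b :: complex
  assumes "norm a = 1" "norm b = 1" "0 \<le> r" "r < 1"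
  shows "norm (b - of_real r * a) > 0"
proof -
  have "norm (b - of_real r * a) \<ge> norm b - norm (of_real r * a)" by (rule norm_triangle_ineq2)
  then have "norm (b - of_real r * a) \<ge> 1 - r" using assms by (simp add: norm_mult)
  then show ?thesis using assms by linarith
qed

lemma mean_ineq_holo:
  fixes k :: "complex \<Rightarrow> complex"
  assumes holk: "k holomorphic_on ball 0 R" and R: "1 < R" and r: "0 \<le> r" "r < 1"
  shows "integral {0..1} (\<lambda>s. norm (k (of_real r * cis (2*pi* s))))
         \<le> integral {0..1} (\<lambda>t. norm (k (cis (2*pi*t))))"
proof -
  define E where "E t = cis (2*pi*t)" for t :: real
  define P where "P w e = (1 - norm w ^ 2) / norm (e - w) ^ 2" for w e :: complex
  define F where "F s t = norm (k (E t)) * P (of_real r * E s) (E t)" for s t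
  have nE: "norm (E t) = 1" for t by (simp add: E_def)
  have contk: "continuous_on (ball 0 R) k" using holk holomorphic_on_imp_continuous_on by blast
  have contkE: "continuous_on UNIV (\<lambda>t. k (E t))"
    unfolding E_def using cont_on_circle_comp[OF contk R] .
  have contE: "continuous_on UNIV E" unfolding E_def by (auto intro!: continuous_intros)
  have pos: "norm (E t - of_real r * E s) > 0" for s t using dist_unit_pos[OF nE nE r] .
  have contF: "continuous_on UNIV (\<lambda>(s, t). F s t)"
    unfolding F_def P_def
    using pos
    by (auto intro!: continuous_intros continuous_on_compose2[OF contkE] continuous_on_compose2[OF contE]
        simp: case_prod_unfold)
  have P_nonneg: "P (of_real r * E s) (E t) \<ge> 0" for s t
    unfolding P_def using r by (simp add: norm_mult nE power_le_one)
  have step1: "norm (k (of_real r * E s)) \<le> integral {0..1} (F s)" for s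
  proof -
    have z: "norm (of_real r * E s) < 1" using r by (simp add: norm_mult nE)
    have hi: "((\<lambda>t. k (E t) * of_real (P (of_real r * E s) (E t))) has_integral k (of_real r * E s)) {0..1}"
      using poisson_repr[OF holk R z] unfolding E_def P_def .
    have "continuous_on {0..1} (\<lambda>t. (\<lambda>(s, t). F s t) (s, t))"
      by (rule continuous_on_compose2[OF contF]) (auto intro!: continuous_intros)
    then have cFs: "continuous_on {0..1} (F s)" by simp
    have "norm (k (of_real r * E s)) = norm (integral {0..1} (\<lambda>t. k (E t) * of_real (P (of_real r * E s) (E t))))"
      using hi by (simp add: integral_unique)
    also have "\<dots> \<le> integral {0..1} (F s)"
      apply (rule integral_norm_bound_integral)
      using hi apply blast
      using cFs integrable_continuous_interval apply blast
      using P_nonneg by (simp add: F_def norm_mult)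
    finally show ?thesis .
  qed
  have int1: "integral {0..1} (\<lambda>s. integral {0..1} (F s)) = integral {0..1} (\<lambda>t. integral {0..1} (\<lambda>s. F s t))"
    using integral_swap_continuous[where a="0::real" and b=1 and c="0::real" and d=1 and f=F]
      continuous_on_subset[OF contF] by (simp add: cbox_interval)
  have inner: "integral {0..1} (\<lambda>s. F s t) = norm (k (E t))" for t
  proof -
    have z: "norm (of_real r * E t) < 1" using r by (simp add: norm_mult nE)
    have "((\<lambda>s. (1::complex) * of_real (P (of_real r * E t) (E s))) has_integral 1) {0..1}"
      using poisson_repr[of "\<lambda>_. 1" R, OF _ R z] unfolding E_def P_def by simp
    from has_integral_Re[OF this] have "((\<lambda>s. P (of_real r * E t) (E s)) has_integral 1) {0..1}"
      by simp
    moreover have "P (of_real r * E t) (E s) = P (of_real r * E s) (E t)" for s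
      unfolding P_def using norm_sym_unit[OF nE nE, of s r t] by (simp add: norm_mult nE)
    ultimately have "((\<lambda>s. P (of_real r * E s) (E t)) has_integral 1) {0..1}" by simp
    then have "((\<lambda>s. F s t) has_integral norm (k (E t)) * 1) {0..1}"
      unfolding F_def by (rule has_integral_mult_right)
    then show ?thesis by (simp add: integral_unique)
  qed
  have "integral {0..1} (\<lambda>s. norm (k (of_real r * E s))) \<le> integral {0..1} (\<lambda>s. integral {0..1} (F s))"
  proof (rule integral_le)
    show "(\<lambda>s. norm (k (of_real r * E s))) integrable_on {0..1}"
      apply (rule integrable_continuous_interval)
      apply (rule continuous_on_norm)
      apply (rule continuous_on_compose2[OF contk])
      using r R by (auto intro!: continuous_intros simp: E_def norm_mult)
    show "(\<lambda>s. integral {0..1} (F s)) integrable_on {0..1}"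
    proof (rule integrable_continuous_interval)
      have "continuous_on {0..1} (\<lambda>s. integral (cbox 0 1) (F s))"
        by (rule integral_continuous_on_param) (use continuous_on_subset[OF contF] in auto)
      then show "continuous_on {0..1} (\<lambda>s. integral {0..1} (F s))" by (simp add: cbox_interval)
    qed
  qed (use step1 in auto)
  also have "\<dots> = integral {0..1} (\<lambda>t. norm (k (E t)))"
    using int1 inner by simp
  finally show ?thesis unfolding E_def .
qed



lemma integrable_circle_powr:
  fixes g :: "complex \<Rightarrow> complex"
  assumes "continuous_on (ball 0 R) g" "1 < R" "0 \<le> r" "r \<le> 1" "0 < p"
  shows "(\<lambda>t. norm (g (of_real r * cis (2 * pi * t))) powr p) integrable_on {0..1}"
proof (rule integrable_continuous_interval)
  have c: "continuous_on {0..1} (\<lambda>t. g (of_real r * cis (2 * pi * t)))"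
    apply (rule continuous_on_compose2[OF assms(1)])
    using assms by (auto intro!: continuous_intros simp: norm_mult)
  show "continuous_on {0..1} (\<lambda>t. norm (g (of_real r * cis (2 * pi * t))) powr p)"
    by (rule continuous_on_powr'[where g="\<lambda>_. p"]) (use c assms(5) in \<open>auto intro!: continuous_intros\<close>)
qed

lemma mean_ineq_zerofree:
  fixes g :: "complex \<Rightarrow> complex"
  assumes holg: "g holomorphic_on ball 0 R" and R: "1 < R" and nz: "\<And>z. z \<in> ball 0 R \<Longrightarrow> g z \<noteq> 0"
    and r: "0 \<le> r" "r < 1" and p: "0 < p"
  shows "integral {0..1} (\<lambda>t. norm (g (of_real r * cis (2 * pi * t))) powr p)
         \<le> integral {0..1} (\<lambda>t. norm (g (cis (2 * pi * t))) powr p)"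
proof -
  obtain L where holL: "L holomorphic_on ball 0 R" and gL: "\<And>z. z \<in> ball 0 R \<Longrightarrow> g z = exp (L z)"
    using contractible_imp_holomorphic_log[OF holg convex_imp_contractible[OF convex_ball] nz] by blast
  define k where "k z = exp (of_real p * L z)" for z
  have holk: "k holomorphic_on ball 0 R" unfolding k_def using holL by (auto intro!: holomorphic_intros)
  have nk: "norm (k z) = norm (g z) powr p" if "z \<in> ball 0 R" for z
    using gL[OF that] by (simp add: k_def norm_exp_eq_Re exp_powr_real mult.commute)
  have inb: "of_real r' * cis (2 * pi * t) \<in> ball 0 R" if "0 \<le> r'" "r' \<le> 1" for r' t
    using that R by (simp add: norm_mult)
  have "integral {0..1} (\<lambda>t. norm (g (of_real r * cis (2 * pi * t))) powr p)
      = integral {0..1} (\<lambda>t. norm (k (of_real r * cis (2 * pi * t))))"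
    using nk[OF inb] r by simp
  also have "\<dots> \<le> integral {0..1} (\<lambda>t. norm (k (cis (2 * pi * t))))"
    by (rule mean_ineq_holo[OF holk R r])
  also have "\<dots> = integral {0..1} (\<lambda>t. norm (g (cis (2 * pi * t))) powr p)"
    using nk[OF inb[of 1]] by simp
  finally show ?thesis .
qed

lemma zeros_finite_compact:
  assumes holf: "f holomorphic_on S" and S: "open S" "connected S" and K: "compact K" "K \<subseteq> S"
    and w: "w \<in> S" "f w \<noteq> 0"
  shows "finite {z\<in>K. f z = 0}"
proof (rule ccontr)
  assume inf: "infinite {z\<in>K. f z = 0}"
  have "\<exists>x\<in>K. x islimpt {z\<in>K. f z = 0}"
    using K(1) inf unfolding compact_eq_Bolzano_Weierstrass by auto
  then obtain \<xi> where xiK: "\<xi> \<in> K" and lim: "\<xi> islimpt {z\<in>K. f z = 0}" by blast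
  have sub: "{z\<in>K. f z = 0} \<subseteq> S" using K by auto
  have xiS: "\<xi> \<in> S" using K xiK by auto
  have "f w = 0"
    by (rule analytic_continuation[OF holf S(1) S(2) sub xiS lim]) (auto simp: w)
  with w show False by simp
qed

lemma blaschke_norm:
  fixes b w :: complex
  assumes b: "norm b < 1" and w: "norm w \<le> 1"
  shows "norm (w - b) \<le> norm (1 - cnj b * w)"
    and "norm w = 1 \<Longrightarrow> norm (w - b) = norm (1 - cnj b * w)"
proof -
  have "complex_of_real (norm (1 - cnj b * w) ^ 2 - norm (w - b) ^ 2)
       = (1 - cnj b * w) * cnj (1 - cnj b * w) - (w - b) * cnj (w - b)"
    by (simp only: of_real_diff complex_norm_square)
  also have "\<dots> = (1 - w * cnj w) * (1 - b * cnj b)" by (simp add: algebra_simps)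
  also have "\<dots> = complex_of_real ((1 - norm w ^ 2) * (1 - norm b ^ 2))"
    by (simp only: of_real_diff of_real_mult complex_norm_square of_real_1)
  finally have eq: "norm (1 - cnj b * w) ^ 2 - norm (w - b) ^ 2 = (1 - norm w ^ 2) * (1 - norm b ^ 2)"
    using of_real_eq_iff by blast
  have w2: "norm w ^ 2 \<le> 1" using w by (simp add: power_le_one)
  have b2: "norm b ^ 2 \<le> 1" using b by (simp add: power_le_one)
  have "(1 - norm w ^ 2) * (1 - norm b ^ 2) \<ge> 0"
    using w2 b2 by (intro mult_nonneg_nonneg) auto
  then have "norm (w - b) ^ 2 \<le> norm (1 - cnj b * w) ^ 2" using eq by linarith
  then show "norm (w - b) \<le> norm (1 - cnj b * w)" by (rule power2_le_imp_le[OF _ norm_ge_zero])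
  assume "norm w = 1"
  then have "norm (w - b) ^ 2 = norm (1 - cnj b * w) ^ 2" using eq by simp
  then show "norm (w - b) = norm (1 - cnj b * w)" by (rule power2_eq_imp_eq[OF _ norm_ge_zero norm_ge_zero])
qed

lemma one_minus_cnj_nz:
  fixes b u :: complex
  assumes b: "norm b < 1" and u: "norm u < 2 / (1 + norm b)"
  shows "1 - cnj b * u \<noteq> 0"
proof -
  have "norm (cnj b * u) < 1"
  proof (cases "b = 0")
    case False
    then have "norm (cnj b * u) = norm b * norm u" by (simp add: norm_mult)
    also have "\<dots> < norm b * (2 / (1 + norm b))" using u False by (intro mult_strict_left_mono) auto
    also have "\<dots> \<le> 1" using b by (simp add: field_simps add_pos_nonneg)
    finally show ?thesis .
  qed simp
  then show ?thesis by (metis norm_one order.irrefl right_minus_eq)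
qed



lemma ball_cover_unit:
  assumes "0 < e"
  shows "ball (0::complex) (1 + e) \<subseteq> (\<Union>x\<in>cball 0 1. ball x e)"
proof
  fix z :: complex assume z: "z \<in> ball 0 (1 + e)"
  show "z \<in> (\<Union>x\<in>cball 0 1. ball x e)"
  proof (cases "norm z \<le> 1")
    case True then show ?thesis using assms by force
  next
    case False
    then have nz: "norm z > 1" by simp
    then have z0: "z \<noteq> 0" by auto
    define x where "x = z / of_real (norm z)"
    have nx: "norm x = 1" using z0 by (simp add: x_def norm_divide)
    have zx: "z - x = z * of_real (1 - 1 / norm z)" using z0 by (simp add: x_def field_simps)
    have "norm (z - x) = norm z * abs (1 - 1 / norm z)" unfolding zx by (simp only: norm_mult norm_of_real)
    also have "abs (1 - 1 / norm z) = 1 - 1 / norm z"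
    proof -
      have "1 / norm z < 1" using nz by (simp add: divide_less_eq_1)
      then have "0 < 1 - 1 / norm z" by simp
      then show ?thesis by simp
    qed
    finally have "norm (z - x) = norm z * (1 - 1 / norm z)" .
    also have "\<dots> = norm z - 1" using z0 by (simp add: field_simps)
    also have "\<dots> < e" using z by simp
    finally have "z \<in> ball x e" by (simp add: dist_norm norm_minus_commute)
    then show ?thesis using nx by auto
  qed
qed

lemma mean_ineq_circle_nz:
  fixes p r :: real and n :: nat
  assumes r: "0 \<le> r" "r < 1" and p: "0 < p"
  shows "\<And>g R. g holomorphic_on ball 0 R \<Longrightarrow> 1 < R \<Longrightarrow> (\<And>z. norm z = 1 \<Longrightarrow> g z \<noteq> 0) \<Longrightarrow>
          card {z\<in>ball 0 1. g z = 0} = n \<Longrightarrow>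
          integral {0..1} (\<lambda>t. norm (g (of_real r * cis (2 * pi * t))) powr p)
          \<le> integral {0..1} (\<lambda>t. norm (g (cis (2 * pi * t))) powr p)"
proof (induction n)
  case 0
  note holg = "0.prems"(1) and R = "0.prems"(2) and sph = "0.prems"(3) and card = "0.prems"(4)
  have fin: "finite {z\<in>ball 0 1. g z = 0}"
  proof (rule finite_subset)
    show "finite {z\<in>cball 0 1. g z = 0}"
      by (rule zeros_finite_compact[OF holg open_ball connected_ball compact_cball, where w=1])
         (use R sph in auto)
  qed auto
  then have Z: "{z\<in>ball 0 1. g z = 0} = {}" using card by simp
  have nzc: "g z \<noteq> 0" if "z \<in> cball 0 1" for z
    using that Z sph by (cases "norm z = 1") (auto simp: dist_norm)
  define B where "B = ball 0 R \<inter> g -` (- {0})"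
  have oB: "open B" unfolding B_def
    by (rule continuous_open_preimage[OF holomorphic_on_imp_continuous_on[OF holg]]) auto
  have cB: "cball 0 1 \<subseteq> B" using nzc R by (auto simp: B_def)
  obtain e where e: "e > 0" "(\<Union>x\<in>cball 0 1. ball x e) \<subseteq> B"
    using compact_subset_open_imp_ball_epsilon_subset[OF compact_cball oB cB] by blast
  have sub: "ball 0 (1 + e) \<subseteq> B" using ball_cover_unit[OF e(1)] e(2) by blast
  show ?case
  proof (rule mean_ineq_zerofree[OF _ _ _ r p])
    show "g holomorphic_on ball 0 (1 + e)"
      by (rule holomorphic_on_subset[OF holg]) (use sub in \<open>auto simp: B_def\<close>)
    show "1 < 1 + e" using e by simp
    show "\<And>z. z \<in> ball 0 (1 + e) \<Longrightarrow> g z \<noteq> 0" using sub by (auto simp: B_def)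
  qed
next
  case (Suc n)
  note holg = "Suc.prems"(1) and R = "Suc.prems"(2) and sph = "Suc.prems"(3) and card = "Suc.prems"(4)
  define Z where "Z = {z\<in>ball 0 1. g z = 0}"
  have fin: "finite Z"
  proof (rule finite_subset)
    show "finite {z\<in>cball 0 1. g z = 0}"
      by (rule zeros_finite_compact[OF holg open_ball connected_ball compact_cball, where w=1])
         (use R sph in auto)
  qed (auto simp: Z_def)
  have "Z \<noteq> {}" using card unfolding Z_def[symmetric] by (metis card.empty nat.distinct(1))
  then obtain b where bZ: "b \<in> Z" by blast
  then have b: "norm b < 1" "g b = 0" by (auto simp: Z_def)
  have bR: "b \<in> ball 0 R" using b R by simp
  have nonconst: "\<not> g constant_on ball 0 R"
  proof
    assume "g constant_on ball 0 R"
    then have "g 1 = g b" using bR R unfolding constant_on_def by auto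
    then show False using b sph[of 1] by simp
  qed
  obtain m \<rho> h where m: "0 < m" and rho: "0 < \<rho>" "ball b \<rho> \<subseteq> ball 0 R"
    and holh: "h holomorphic_on ball b \<rho>"
    and gh: "\<And>w. w \<in> ball b \<rho> \<Longrightarrow> g w = (w - b) ^ m * h w"
    and hnz: "\<And>w. w \<in> ball b \<rho> \<Longrightarrow> h w \<noteq> 0"
    using holomorphic_factor_zero_nonconstant[OF holg open_ball connected_ball bR b(2) nonconst] by metis
  define R' where "R' = min R (2 / (1 + norm b))"
  have "1 < 2 / (1 + norm b)" using b by (simp add: field_simps add_pos_nonneg)
  then have R'1: "1 < R'" using R by (auto simp: R'_def)
  have R'R: "ball 0 R' \<subseteq> ball 0 R" by (auto simp: R'_def)
  have cnz: "1 - cnj b * w \<noteq> 0" if "w \<in> ball 0 R'" for w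
    using one_minus_cnj_nz[OF b(1)] that by (auto simp: R'_def)
  define G where "G w = (if w = b then h b * (1 - cnj b * b) ^ m else g w * ((1 - cnj b * w) / (w - b)) ^ m)" for w
  have G_off: "G w = g w * ((1 - cnj b * w) / (w - b)) ^ m" if "w \<noteq> b" for w
    using that by (simp add: G_def)
  have G_near: "G w = h w * (1 - cnj b * w) ^ m" if "w \<in> ball b \<rho>" for w
  proof (cases "w = b")
    case False
    then have "G w = (w - b) ^ m * h w * ((1 - cnj b * w) ^ m / (w - b) ^ m)"
      using gh[OF that] by (simp add: G_off power_divide)
    also have "\<dots> = h w * (1 - cnj b * w) ^ m" using False by (simp add: field_simps)
    finally show ?thesis .
  qed (simp add: G_def)
  have holG: "G holomorphic_on ball 0 R'"
  proof -
    have h1: "G holomorphic_on (ball 0 R' - {b})"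
    proof (rule holomorphic_transform[of "\<lambda>w. g w * ((1 - cnj b * w) / (w - b)) ^ m"])
      show "(\<lambda>w. g w * ((1 - cnj b * w) / (w - b)) ^ m) holomorphic_on ball 0 R' - {b}"
        using holomorphic_on_subset[OF holg, of "ball 0 R' - {b}"] R'R
        by (auto intro!: holomorphic_intros)
    qed (simp add: G_off)
    have h2: "G holomorphic_on (ball b \<rho> \<inter> ball 0 R')"
    proof (rule holomorphic_transform[of "\<lambda>w. h w * (1 - cnj b * w) ^ m"])
      show "(\<lambda>w. h w * (1 - cnj b * w) ^ m) holomorphic_on ball b \<rho> \<inter> ball 0 R'"
        using holomorphic_on_subset[OF holh, of "ball b \<rho> \<inter> ball 0 R'"]
        by (auto intro!: holomorphic_intros)
    qed (simp add: G_near)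
    have "G holomorphic_on (ball 0 R' - {b}) \<union> (ball b \<rho> \<inter> ball 0 R')"
      by (rule holomorphic_on_Un[OF h1 h2]) auto
    moreover have "(ball 0 R' - {b}) \<union> (ball b \<rho> \<inter> ball 0 R') = ball 0 R'"
      using rho(1) b(1) R'1 by auto
    ultimately show ?thesis by simp
  qed
  have gG: "g w = G w * ((w - b) / (1 - cnj b * w)) ^ m" if "w \<in> ball 0 R'" "w \<noteq> b" for w
  proof -
    have "w - b \<noteq> 0" "1 - cnj b * w \<noteq> 0" using that cnz by auto
    then show ?thesis using that by (simp add: G_off power_divide field_simps)
  qed
  have Gb: "G b \<noteq> 0"
  proof -
    have "1 - cnj b * b \<noteq> 0" using cnz[of b] b R'1 by auto
    then show ?thesis using hnz[of b] rho(1) by (simp add: G_def)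
  qed
  have Gnz_iff: "G w = 0 \<longleftrightarrow> (w \<noteq> b \<and> g w = 0)" if "w \<in> ball 0 R'" for w
  proof (cases "w = b")
    case False
    have "w - b \<noteq> 0" "1 - cnj b * w \<noteq> 0" using False that cnz by auto
    then show ?thesis using False by (simp add: G_off)
  qed (use Gb in auto)
  have unit_in: "w \<in> ball 0 R'" if "norm w \<le> 1" for w using that R'1 by simp
  have sphG: "G z \<noteq> 0" if "norm z = 1" for z
    using Gnz_iff[OF unit_in] that sph[OF that] by simp
  have Gi: "G w = 0 \<longleftrightarrow> (w \<noteq> b \<and> g w = 0)" if "norm w < 1" for w
    using Gnz_iff[OF unit_in] that by simp
  have ZG: "{z\<in>ball 0 1. G z = 0} = Z - {b}"
    using Gi by (auto simp: Z_def)
  have cardG: "card {z\<in>ball 0 1. G z = 0} = n"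
  proof -
    have cZ: "card Z = Suc n" using card by (simp add: Z_def)
    have "card {z\<in>ball 0 1. G z = 0} = card (Z - {b})" by (simp only: ZG)
    also have "\<dots> = n" using card_Diff_singleton[OF bZ] cZ by simp
    finally show ?thesis .
  qed
  have IH: "integral {0..1} (\<lambda>t. norm (G (of_real r * cis (2 * pi * t))) powr p)
          \<le> integral {0..1} (\<lambda>t. norm (G (cis (2 * pi * t))) powr p)"
    by (rule Suc.IH[OF holG R'1 sphG cardG])
  have le: "norm (g w) powr p \<le> norm (G w) powr p" if "norm w \<le> 1" for w
  proof (cases "w = b")
    case True then show ?thesis using b by simp
  next
    case False
    have "norm ((w - b) / (1 - cnj b * w)) \<le> 1"
      using blaschke_norm(1)[OF b(1) that] cnz[OF unit_in[OF that]] by (simp add: norm_divide divide_le_eq_1)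
    then have "norm ((w - b) / (1 - cnj b * w)) ^ m \<le> 1" by (simp add: power_le_one)
    then have "norm (g w) \<le> norm (G w)"
      using gG[OF unit_in[OF that] False] by (simp add: norm_mult norm_power mult_left_le)
    then show ?thesis using p by (simp add: powr_mono2)
  qed
  have eq: "norm (g w) = norm (G w)" if "norm w = 1" for w
  proof -
    have wb: "w \<noteq> b" using that b by auto
    have "norm ((w - b) / (1 - cnj b * w)) = 1"
      using blaschke_norm(2)[OF b(1) _ that] cnz[OF unit_in] that wb by (simp add: norm_divide)
    then show ?thesis using gG[OF unit_in wb] that by (simp add: norm_mult norm_power)
  qed
  have contg: "continuous_on (ball 0 R) g" using holg holomorphic_on_imp_continuous_on by blast
  have contG: "continuous_on (ball 0 R') G" using holG holomorphic_on_imp_continuous_on by blast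
  have "integral {0..1} (\<lambda>t. norm (g (of_real r * cis (2 * pi * t))) powr p)
      \<le> integral {0..1} (\<lambda>t. norm (G (of_real r * cis (2 * pi * t))) powr p)"
    apply (rule integral_le)
      apply (rule integrable_circle_powr[OF contg R]; use r p in simp)
     apply (rule integrable_circle_powr[OF contG R'1]; use r p in simp)
    using le r by (simp add: norm_mult)
  also note IH
  also have "integral {0..1} (\<lambda>t. norm (G (cis (2 * pi * t))) powr p)
      = integral {0..1} (\<lambda>t. norm (g (cis (2 * pi * t))) powr p)"
    using eq by simp
  finally show ?case .
qed



lemma mono_mean:
  assumes holf: "f holomorphic_on ball 0 1" and r: "0 \<le> r" "r < s" "s < 1"
    and nz: "\<And>z. norm z = s \<Longrightarrow> f z \<noteq> 0" and p: "0 < p"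
  shows "circle_mean p f r \<le> circle_mean p f s"
proof -
  have s0: "0 < s" using r by simp
  define g where "g w = f (of_real s * w)" for w
  have holg: "g holomorphic_on ball 0 (1 / s)"
  proof -
    have "(f \<circ> (\<lambda>w. of_real s * w)) holomorphic_on ball 0 (1 / s)"
    proof (rule holomorphic_on_compose_gen[OF _ holf])
      show "(\<lambda>w::complex. of_real s * w) holomorphic_on ball 0 (1 / s)" by (auto intro!: holomorphic_intros)
      show "(\<lambda>w::complex. of_real s * w) ` ball 0 (1 / s) \<subseteq> ball 0 1"
      proof
        fix x :: complex assume "x \<in> (\<lambda>w. of_real s * w) ` ball 0 (1 / s)"
        then obtain w :: complex where w: "norm w < 1 / s" "x = of_real s * w" by (auto simp: dist_0_norm)
        have "norm x = s * norm w" using w s0 by (simp add: norm_mult)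
        also have "\<dots> < s * (1 / s)" using w s0 by (intro mult_strict_left_mono) auto
        finally show "x \<in> ball 0 1" using s0 by simp
      qed
    qed
    then show ?thesis by (simp add: g_def[abs_def] o_def)
  qed
  have R: "1 < 1 / s" using r s0 by (simp add: field_simps)
  have sph: "g z \<noteq> 0" if "norm z = 1" for z
    using nz[of "of_real s * z"] that s0 by (simp add: g_def norm_mult)
  have "integral {0..1} (\<lambda>t. norm (g (of_real (r / s) * cis (2 * pi * t))) powr p)
        \<le> integral {0..1} (\<lambda>t. norm (g (cis (2 * pi * t))) powr p)"
    by (rule mean_ineq_circle_nz[OF _ _ p holg R sph refl]) (use r s0 in auto)
  moreover have "\<And>t. g (of_real (r / s) * cis (2 * pi * t)) = f (of_real r * cis (2 * pi * t))"
    using s0 by (simp add: g_def)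
  moreover have "\<And>t. g (cis (2 * pi * t)) = f (of_real s * cis (2 * pi * t))"
    by (simp add: g_def)
  ultimately show ?thesis by (simp add: circle_mean_def)
qed

lemma good_radius:
  assumes holf: "f holomorphic_on ball 0 1" and w: "w \<in> ball 0 1" "f w \<noteq> 0"
    and s0: "0 \<le> s0" "s0 < 1"
  shows "\<exists>s. s0 < s \<and> s < 1 \<and> (\<forall>z. norm z = s \<longrightarrow> f z \<noteq> 0)"
proof -
  define s1 where "s1 = (s0 + 1) / 2"
  have s1: "s0 < s1" "s1 < 1" using s0 by (auto simp: s1_def)
  have fin: "finite {z\<in>cball 0 s1. f z = 0}"
    by (rule zeros_finite_compact[OF holf open_ball connected_ball compact_cball _ w]) (use s1 in auto)
  then have fin2: "finite (norm ` {z\<in>cball 0 s1. f z = 0})" by simp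
  have "infinite {s0<..<s1}" using s1 by simp
  then have "{s0<..<s1} - norm ` {z\<in>cball 0 s1. f z = 0} \<noteq> {}"
    using fin2 Diff_infinite_finite by (metis finite.emptyI infinite_remove)
  then obtain s where s: "s \<in> {s0<..<s1}" "s \<notin> norm ` {z\<in>cball 0 s1. f z = 0}" by blast
  have "f z \<noteq> 0" if "norm z = s" for z
  proof
    assume "f z = 0"
    then have "z \<in> {z\<in>cball 0 s1. f z = 0}" using that s(1) by auto
    then show False using s(2) that by blast
  qed
  then show ?thesis using s(1) s1 by auto
qed



lemma circle_integrand_mult:
  fixes f :: "complex \<Rightarrow> complex"
  assumes "0 \<le> s" "0 < p"
  shows "cmod ((complex_of_real s * cis (2 * pi * t)) ^ n * f (complex_of_real s * cis (2 * pi * t))) powr p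
       = (s ^ n) powr p * cmod (f (complex_of_real s * cis (2 * pi * t))) powr p"
proof -
  have "cmod ((complex_of_real s * cis (2 * pi * t)) ^ n * f (complex_of_real s * cis (2 * pi * t)))
      = s ^ n * cmod (f (complex_of_real s * cis (2 * pi * t)))"
    using assms by (simp add: norm_mult norm_power)
  then show ?thesis using assms by (simp add: powr_mult)
qed

lemma circle_mean_mult:
  fixes f :: "complex \<Rightarrow> complex"
  assumes "0 \<le> s" "0 < p"
  shows "circle_mean p (\<lambda>z. z ^ n * f z) s = (s ^ n) powr p * circle_mean p f s"
  unfolding circle_mean_def using circle_integrand_mult[OF assms]
  by (simp add: integral_mult_right)

lemma circle_mean_nonneg:
  assumes "(\<lambda>t. cmod (f (complex_of_real r * cis (2 * pi * t))) powr p) integrable_on {0..1}"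
  shows "0 \<le> circle_mean p f r"
  unfolding circle_mean_def by (rule integral_nonneg[OF assms]) simp

lemma hardy_mult_zn:
  fixes f :: "complex \<Rightarrow> complex"
  assumes H: "in_Hardy p f" and p: "0 < p"
  shows "in_Hardy p (\<lambda>z. z ^ n * f z)"
    and "\<And>r. r \<in> {0<..<1} \<Longrightarrow> circle_mean p f r powr (1 / p) \<le> Hardy_norm p (\<lambda>z. z ^ n * f z)"
proof -
  have holf: "f holomorphic_on ball 0 1" and intf: "\<And>r. r \<in> {0<..<1} \<Longrightarrow>
      (\<lambda>t. cmod (f (complex_of_real r * cis (2 * pi * t))) powr p) integrable_on {0..1}"
    and bdd: "bdd_above (circle_mean p f ` {0<..<1})"
    using H unfolding in_Hardy_def by auto
  define g where "g z = z ^ n * f z" for z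
  have cmg: "circle_mean p g s = (s ^ n) powr p * circle_mean p f s" if "0 \<le> s" for s
    using circle_mean_mult[OF that p] unfolding g_def .
  have cmnn: "0 \<le> circle_mean p f s" if "s \<in> {0<..<1}" for s
    using circle_mean_nonneg[OF intf[OF that]] .
  have intg: "(\<lambda>t. cmod (g (complex_of_real r * cis (2 * pi * t))) powr p) integrable_on {0..1}"
    if "r \<in> {0<..<1}" for r
    using integrable_on_mult_right[OF intf[OF that], of "(r ^ n) powr p"]
      circle_integrand_mult[where s=r and p=p and f=f and n=n] that p by (simp add: g_def)
  obtain B where B: "\<And>s. s \<in> {0<..<1} \<Longrightarrow> circle_mean p f s \<le> B"
    using bdd unfolding bdd_above_def by (metis image_eqI)
  have le1: "(s ^ n) powr p \<le> 1" if "s \<in> {0<..<1}" for s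
  proof -
    have "s ^ n \<le> 1" using that by (simp add: power_le_one)
    then have "(s ^ n) powr p \<le> 1 powr p" using that p by (intro powr_mono2) auto
    then show ?thesis by simp
  qed
  have bddg: "bdd_above (circle_mean p g ` {0<..<1})"
  proof (rule bdd_aboveI2)
    fix s :: real assume s: "s \<in> {0<..<1}"
    have "circle_mean p g s = (s ^ n) powr p * circle_mean p f s" using cmg s by simp
    also have "\<dots> \<le> 1 * circle_mean p f s" using le1[OF s] cmnn[OF s] by (intro mult_right_mono) auto
    also have "\<dots> \<le> B" using B[OF s] by simp
    finally show "circle_mean p g s \<le> B" .
  qed
  have holg: "g holomorphic_on ball 0 1" unfolding g_def using holf by (auto intro!: holomorphic_intros)
  show "in_Hardy p (\<lambda>z. z ^ n * f z)"
    using holg intg bddg unfolding in_Hardy_def g_def[abs_def] by auto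
  define A where "A = (SUP s\<in>{0<..<1}. circle_mean p g s)"
  have cmg_le: "circle_mean p g s \<le> A" if "s \<in> {0<..<1}" for s
    unfolding A_def by (rule cSUP_upper[OF that bddg])
  have A0: "0 \<le> A"
  proof -
    have h: "(1/2::real) \<in> {0<..<1}" by simp
    have "0 \<le> ((1/2::real) ^ n) powr p * circle_mean p f (1/2)" using cmnn[OF h] by simp
    also have "\<dots> = circle_mean p g (1/2)" using cmg[of "1/2"] by simp
    also have "\<dots> \<le> A" using cmg_le[OF h] .
    finally show ?thesis .
  qed
  fix r :: real assume r: "r \<in> {0<..<1}"
  have Mr: "circle_mean p f r \<le> A"
  proof (cases "\<forall>w\<in>ball 0 1. f w = 0")
    case True
    have "circle_mean p f r = 0"
      unfolding circle_mean_def using True r p by (simp add: norm_mult)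
    then show ?thesis using A0 by simp
  next
    case False
    then obtain w0 where w0: "w0 \<in> ball 0 1" "f w0 \<noteq> 0" by auto
    have ev: "\<forall>\<^sub>F s0 in at_left 1. (s0 ^ n) powr p * circle_mean p f r \<le> A"
    proof -
      have "\<forall>\<^sub>F s0 in at_left (1::real). s0 \<in> {r<..<1}" using r by (intro eventually_at_left_real) auto
      then show ?thesis
      proof (rule eventually_mono)
        fix s0 :: real assume s0: "s0 \<in> {r<..<1}"
        obtain s where s: "s0 < s" "s < 1" "\<forall>z. norm z = s \<longrightarrow> f z \<noteq> 0"
          using good_radius[OF holf w0, of s0] s0 r by auto
        have sI: "s \<in> {0<..<1}" using s s0 r by auto
        have mono: "circle_mean p f r \<le> circle_mean p f s"
          by (rule mono_mean[OF holf]) (use r s s0 p in auto)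
        have "(s0 ^ n) powr p \<le> (s ^ n) powr p"
          using s s0 r p by (intro powr_mono2 power_mono) auto
        then have "(s0 ^ n) powr p * circle_mean p f r \<le> (s ^ n) powr p * circle_mean p f s"
          using mono cmnn[OF r] by (intro mult_mono) auto
        also have "\<dots> = circle_mean p g s" using cmg sI by simp
        also have "\<dots> \<le> A" using cmg_le[OF sI] .
        finally show "(s0 ^ n) powr p * circle_mean p f r \<le> A" .
      qed
    qed
    have lim: "((\<lambda>s0. (s0 ^ n) powr p * circle_mean p f r) \<longlongrightarrow> (1 ^ n) powr p * circle_mean p f r) (at_left 1)"
      by (intro tendsto_intros) auto
    have "(1 ^ n) powr p * circle_mean p f r \<le> A"
      by (rule tendsto_upperbound[OF lim ev]) simp
    then show ?thesis by simp
  qed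
  have "circle_mean p f r powr (1 / p) \<le> A powr (1 / p)"
    using Mr cmnn[OF r] p by (intro powr_mono2) auto
  then show "circle_mean p f r powr (1 / p) \<le> Hardy_norm p (\<lambda>z. z ^ n * f z)"
    unfolding Hardy_norm_def A_def g_def[abs_def] .
qed



lemma meas_conv:
  fixes M :: "complex measure" and f :: "complex \<Rightarrow> complex"
  assumes fin: "finite_measure M" and sM: "sets M = sets (restrict_space borel (cball (0::complex) 1))"
    and cf: "continuous_on (cball 0 1) f" and q: "0 < q"
  shows "(\<lambda>n. \<integral>z. cmod (z ^ n * f z) powr q \<partial>M) \<longlonglongrightarrow> (\<integral>z. cmod (f z) powr q \<partial>(restrict_space M (sphere 0 1)))"
proof -
  have spM: "space M = cball 0 1"
    using sets_eq_imp_space_eq[OF sM] by (simp add: space_restrict_space)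
  have meas: "h \<in> borel_measurable M" if "continuous_on (cball 0 1) h" for h :: "complex \<Rightarrow> real"
    unfolding measurable_cong_sets[OF sM refl, of borel] by (rule borel_measurable_continuous_on_restrict[OF that])
  have contn: "continuous_on (cball 0 1) (\<lambda>z. cmod (z ^ n * f z) powr q)" for n
    by (rule continuous_on_powr'[where g="\<lambda>_. q"]) (use cf q in \<open>auto intro!: continuous_intros\<close>)
  have contf: "continuous_on (cball 0 1) (\<lambda>z. cmod (f z) powr q)"
    by (rule continuous_on_powr'[where g="\<lambda>_. q"]) (use cf q in \<open>auto intro!: continuous_intros\<close>)
  have sphM: "sphere 0 1 \<in> sets M"
    unfolding sM by (subst sets_restrict_space_iff) (auto intro: borel_closed)
  obtain x0 where x0: "x0 \<in> cball 0 1" "\<And>y. y \<in> cball 0 1 \<Longrightarrow> cmod (f y) powr q \<le> cmod (f x0) powr q"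
    using continuous_attains_sup[OF compact_cball _ contf] by fastforce
  define B where "B = cmod (f x0) powr q"
  define lf where "lf z = indicator (sphere 0 1) z * cmod (f z) powr q" for z :: complex
  have lim: "(\<lambda>n. \<integral>z. cmod (z ^ n * f z) powr q \<partial>M) \<longlonglongrightarrow> integral\<^sup>L M lf"
  proof (rule integral_dominated_convergence[where w="\<lambda>_. B"])
    show "lf \<in> borel_measurable M"
      unfolding lf_def by (intro borel_measurable_times borel_measurable_indicator sphM meas contf)
    show "\<And>n. (\<lambda>z. cmod (z ^ n * f z) powr q) \<in> borel_measurable M" using meas contn by blast
    show "integrable M (\<lambda>_. B)" using finite_measure.integrable_const[OF fin] .
    show "AE x in M. (\<lambda>n. cmod (x ^ n * f x) powr q) \<longlonglongrightarrow> lf x"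
    proof (rule AE_I2)
      fix z assume "z \<in> space M"
      then have z: "norm z \<le> 1" by (simp add: spM)
      show "(\<lambda>n. cmod (z ^ n * f z) powr q) \<longlonglongrightarrow> lf z"
      proof (cases "norm z = 1")
        case True
        then show ?thesis by (simp add: lf_def norm_mult norm_power)
      next
        case False
        then have z1: "norm z < 1" using z by simp
        have "(\<lambda>n. norm z ^ n * cmod (f z)) \<longlonglongrightarrow> 0 * cmod (f z)"
          by (intro tendsto_mult tendsto_const LIMSEQ_power_zero) (use z1 in simp)
        then have "(\<lambda>n. cmod (z ^ n * f z) powr q) \<longlonglongrightarrow> 0"
          by (intro tendsto_zero_powrI[where b=q]) (auto simp: norm_mult norm_power q)
        then show ?thesis using False by (simp add: lf_def)
      qed
    qed
    show "\<And>n. AE x in M. norm (cmod (x ^ n * f x) powr q) \<le> B"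
    proof (rule AE_I2)
      fix n and z assume "z \<in> space M"
      then have z: "z \<in> cball 0 1" by (simp add: spM)
      then have "norm z ^ n \<le> 1" by (simp add: power_le_one)
      then have "cmod (z ^ n * f z) \<le> cmod (f z)"
        by (simp add: norm_mult norm_power mult_left_le_one_le)
      then have "cmod (z ^ n * f z) powr q \<le> cmod (f z) powr q" using q by (intro powr_mono2) auto
      also have "\<dots> \<le> B" using x0(2)[OF z] by (simp add: B_def)
      finally show "norm (cmod (z ^ n * f z) powr q) \<le> B" by simp
    qed
  qed
  have "integral\<^sup>L M lf = (\<integral>z. cmod (f z) powr q \<partial>(restrict_space M (sphere 0 1)))"
  proof -
    have "sphere 0 1 \<inter> space M = sphere (0::complex) 1" using spM by auto
    then have "sphere 0 1 \<inter> space M \<in> sets M" using sphM by simp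
    then show ?thesis by (subst integral_restrict_space) (auto simp: lf_def[abs_def])
  qed
  then show ?thesis using lim by simp
qed

theorem lemma3p1:
  fixes p q C :: real and M :: "complex measure"
  assumes "0 < p" and "0 < q" and "0 < C"
    and "finite_measure M"
    and "sets M = sets (restrict_space borel (cball (0::complex) 1))"
    and "\<forall>f. in_Hardy p f \<and> continuous_on (cball 0 1) f \<longrightarrow>
              Hardy_norm p f \<le> C * Lq_norm q M f"
  shows "\<forall>f. in_Hardy p f \<and> continuous_on (cball 0 1) f \<longrightarrow>
              Hardy_norm p f \<le> C * Lq_norm q (restrict_space M (sphere 0 1)) f"
proof (intro allI impI)
  note p = assms(1) and q = assms(2) and C = assms(3)
  fix f :: "complex \<Rightarrow> complex"
  assume fH: "in_Hardy p f \<and> continuous_on (cball 0 1) f"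
  then have H: "in_Hardy p f" and cf: "continuous_on (cball 0 1) f" by auto
  have intf: "\<And>r. r \<in> {0<..<1} \<Longrightarrow>
      (\<lambda>t. cmod (f (complex_of_real r * cis (2 * pi * t))) powr p) integrable_on {0..1}"
    and bdd: "bdd_above (circle_mean p f ` {0<..<1})"
    using H unfolding in_Hardy_def by auto
  define J where "J = (\<integral>z. cmod (f z) powr q \<partial>(restrict_space M (sphere 0 1)))"
  define I where "I n = (\<integral>z. cmod (z ^ n * f z) powr q \<partial>M)" for n :: nat
  have Ilim: "I \<longlonglongrightarrow> J" unfolding I_def J_def by (rule meas_conv[OF assms(4,5) cf q])
  have Inn: "0 \<le> I n" for n unfolding I_def by (rule integral_nonneg_AE) simp
  have Jnn: "0 \<le> J" unfolding J_def by (rule integral_nonneg_AE) simp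
  define L where "L = J powr (1 / q)"
  have L: "Lq_norm q (restrict_space M (sphere 0 1)) f = L"
    unfolding Lq_norm_def L_def J_def ..
  have L0: "0 \<le> C * L" using C by (simp add: L_def)
  have key: "circle_mean p f r \<le> (C * L) powr p" if r: "r \<in> {0<..<1}" for r
  proof -
    define m where "m = circle_mean p f r"
    have m0: "0 \<le> m" unfolding m_def by (rule circle_mean_nonneg[OF intf[OF r]])
    have step: "(m powr (1 / p)) powr q \<le> C powr q * I n" for n
    proof -
      have Hg: "in_Hardy p (\<lambda>z. z ^ n * f z)" by (rule hardy_mult_zn(1)[OF H p])
      have cg: "continuous_on (cball 0 1) (\<lambda>z. z ^ n * f z)" using cf by (auto intro!: continuous_intros)
      have "m powr (1 / p) \<le> Hardy_norm p (\<lambda>z. z ^ n * f z)"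
        unfolding m_def by (rule hardy_mult_zn(2)[OF H p r])
      also have "\<dots> \<le> C * Lq_norm q M (\<lambda>z. z ^ n * f z)" using assms(6) Hg cg by blast
      also have "\<dots> = C * I n powr (1 / q)" by (simp add: Lq_norm_def I_def)
      finally have le: "m powr (1 / p) \<le> C * I n powr (1 / q)" .
      have "(m powr (1 / p)) powr q \<le> (C * I n powr (1 / q)) powr q"
        using le q by (intro powr_mono2) auto
      also have "\<dots> = C powr q * (I n powr (1 / q)) powr q" using C by (simp add: powr_mult)
      also have "(I n powr (1 / q)) powr q = I n" using q Inn[of n] by (simp add: powr_powr)
      finally show ?thesis .
    qed
    have lim2: "(\<lambda>n. C powr q * I n) \<longlonglongrightarrow> C powr q * J" by (intro tendsto_intros Ilim)
    have X: "(m powr (1 / p)) powr q \<le> C powr q * J"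
      by (rule tendsto_lowerbound[OF lim2]) (use step in auto)
    have "m = ((m powr (1 / p)) powr q) powr (p / q)" using m0 p q by (simp add: powr_powr)
    also have "\<dots> \<le> (C powr q * J) powr (p / q)" using X q p by (intro powr_mono2) auto
    also have "\<dots> = (C * L) powr p"
      using C Jnn p q by (simp add: L_def powr_mult powr_powr)
    finally show ?thesis unfolding m_def .
  qed
  have ne: "{0<..<1::real} \<noteq> {}" by simp
  have S: "(SUP r\<in>{0<..<1}. circle_mean p f r) \<le> (C * L) powr p"
    by (rule cSUP_least[OF ne]) (use key in auto)
  have S0: "0 \<le> (SUP r\<in>{0<..<1}. circle_mean p f r)"
  proof -
    have h: "(1/2::real) \<in> {0<..<1}" by simp
    have "0 \<le> circle_mean p f (1/2)" by (rule circle_mean_nonneg[OF intf[OF h]])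
    also have "\<dots> \<le> (SUP r\<in>{0<..<1}. circle_mean p f r)" by (rule cSUP_upper[OF h bdd])
    finally show ?thesis .
  qed
  have "Hardy_norm p f \<le> ((C * L) powr p) powr (1 / p)"
    unfolding Hardy_norm_def using S S0 p by (intro powr_mono2) auto
  also have "\<dots> = C * L" using L0 p by (simp add: powr_powr)
  finally show "Hardy_norm p f \<le> C * Lq_norm q (restrict_space M (sphere 0 1)) f" using L by simp
qed


end
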